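(* Let $\mathbb{H}$ be a quasiconcave classical entropy. Then its maximal extension is additive on classical channels: for classical channels $\mathcal{N}$ from $X$ to $Y$ and $\mathcal{M}$ from $X'$ to $Y'$, $\overline{\mathbb{H}}(YY'|XX')_{\mathcal{N}\otimes\mathcal{M}}=\overline{\mathbb{H}}(Y|X)_{\mathcal{N}}+\overline{\mathbb{H}}(Y'|X')_{\mathcal{M}}$.
   Context: A classical entropy is a function $\mathbb{H}$ on $\bigcup_{n}\mathrm{Prob}(n)$ that is Schur-concave ($\mathbf{p}\succ\mathbf{q}\Rightarrow\mathbb{H}(\mathbf{p})\le\mathbb{H}(\mathbf{q})$, comparing vectors of different lengths after zero-padding) and additive under tensor products; quasiconcave means $\mathbb{H}(\sum_i\lambda_i\mathbf{p}_i)\ge\min_i\mathbb{H}(\mathbf{p}_i)$. Classical channels are column-stochastic matrices; $\mathcal{N}\otimes\mathcal{M}$ has columns $\mathcal{N}(\mathbf{e}_x)\otimes\mathcal{M}(\mathbf{e}_{x'})$. Classical channel majorization (same output): $\mathcal{N}\succ\mathcal{M}$ iff $\mathcal{M}=\mathcal{D}^{YZ\to Y}\circ(\mathcal{N}\otimes\mathrm{id}^Z)\circ\mathcal{S}^{X'\to XZ}$ for classical channels $\mathcal{S},\mathcal{D}$ with $\mathcal{D}(\cdot\otimes\mathbf{e}_z)$ doubly stochastic for all $z$; different output sizes are compared after zero-padding. Probability vectors are channels with trivial input. The maximal extension is $\overline{\mathbb{H}}(Y|X)_{\mathcal{N}}:=\inf\{\mathbb{H}(\mathbf{q}):\mathcal{N}\succ\mathbf{q}\}$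 over probability vectors of arbitrary finite length. *)

theory Defs
  imports Complex_Main
begin

definition prob_vec :: "real list \<Rightarrow> bool" where
  "prob_vec p \<longleftrightarrow> (\<forall>x\<in>set p. 0 \<le> x) \<and> sum_list p = 1"

definition pad :: "nat \<Rightarrow> real list \<Rightarrow> real list" where
  "pad n p = p @ replicate (n - length p) 0"

definition majorizes :: "real list \<Rightarrow> real list \<Rightarrow> bool" where
  "majorizes p q \<longleftrightarrow>
     (let n = max (length p) (length q);
          ps = rev (sort (pad n p)); qs = rev (sort (pad n q))
      in (\<forall>k\<le>n. sum_list (take k qs) \<le> sum_list (take k ps)) \<and> sum_list p = sum_list q)"

definition tensor :: "real list \<Rightarrow> real list \<Rightarrow> real list" where
  "tensor p q = concat (map (\<lambda>a. map (\<lambda>b. a * b) q) p)"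

definition schur_concave :: "(real list \<Rightarrow> real) \<Rightarrow> bool" where
  "schur_concave H \<longleftrightarrow>
     (\<forall>p q. prob_vec p \<and> prob_vec q \<and> majorizes p q \<longrightarrow> H p \<le> H q)"

definition additive :: "(real list \<Rightarrow> real) \<Rightarrow> bool" where
  "additive H \<longleftrightarrow> (\<forall>p q. prob_vec p \<and> prob_vec q \<longrightarrow> H (tensor p q) = H p + H q)"

definition classical_entropy :: "(real list \<Rightarrow> real) \<Rightarrow> bool" where
  "classical_entropy H \<longleftrightarrow> schur_concave H \<and> additive H"

definition quasiconcave :: "(real list \<Rightarrow> real) \<Rightarrow> bool" where
  "quasiconcave H \<longleftrightarrow>
     (\<forall>(k::nat) (n::nat) (lam::nat \<Rightarrow> real) (P::nat \<Rightarrow> real list).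
        0 < k \<and> (\<forall>i<k. 0 \<le> lam i) \<and> (\<Sum>i<k. lam i) = 1 \<and>
        (\<forall>i<k. prob_vec (P i) \<and> length (P i) = n) \<longrightarrow>
        H (map (\<lambda>j. \<Sum>i<k. lam i * (P i ! j)) [0..<n]) \<ge> Min ((\<lambda>i. H (P i)) ` {..<k}))"

text \<open>A classical channel from an input alphabet of size nx to an output alphabet of
  size ny is a column-stochastic matrix, represented as the list of its nx columns
  (each a probability vector of length ny).  Entry N(y|x) is N ! x ! y.\<close>

definition channel :: "nat \<Rightarrow> nat \<Rightarrow> real list list \<Rightarrow> bool" where
  "channel nx ny N \<longleftrightarrow> length N = nx \<and> (\<forall>c\<in>set N. prob_vec c \<and> length c = ny)"

definition is_channel :: "real list list \<Rightarrow> bool" where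
  "is_channel N \<longleftrightarrow> N \<noteq> [] \<and> channel (length N) (length (hd N)) N"

definition out_dim :: "real list list \<Rightarrow> nat" where
  "out_dim N = length (hd N)"

text \<open>Tensor product of channels: column (x,x') (index x * |X'| + x') is N(e_x) \<otimes> M(e_x').\<close>

definition chan_tensor :: "real list list \<Rightarrow> real list list \<Rightarrow> real list list" where
  "chan_tensor N M = concat (map (\<lambda>c. map (\<lambda>d. tensor c d) M) N)"

text \<open>Channel majorization with common output size n:
  M = D \<circ> (N \<otimes> id_Z) \<circ> S, with S : X' \<rightarrow> XZ (index (x,z) \<mapsto> x * nz + z),
  D : YZ \<rightarrow> Y (index (y,z) \<mapsto> y * nz + z), each D(\<cdot> \<otimes> e_z) doubly stochastic.\<close>

definition chan_maj_same :: "nat \<Rightarrow> real list list \<Rightarrow> real list list \<Rightarrow> bool" where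
  "chan_maj_same n N M \<longleftrightarrow>
     (\<exists>(nz::nat) S D.
        channel (length M) (length N * nz) S \<and>
        channel (n * nz) n D \<and>
        (\<forall>z<nz. \<forall>y'<n. (\<Sum>y<n. D ! (y * nz + z) ! y') = 1) \<and>
        (\<forall>x'<length M. \<forall>y'<n.
           M ! x' ! y' =
             (\<Sum>x<length N. \<Sum>z<nz. \<Sum>y<n.
                 D ! (y * nz + z) ! y' * (N ! x ! y) * (S ! x' ! (x * nz + z)))))"

definition chan_majorizes :: "real list list \<Rightarrow> real list list \<Rightarrow> bool" where
  "chan_majorizes N M \<longleftrightarrow>
     (let n = max (out_dim N) (out_dim M)
      in chan_maj_same n (map (pad n) N) (map (pad n) M))"

text \<open>Maximal extension: inf of H(q) over probability vectors q (as channels with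
  trivial input, i.e. a single column) with N \<succ> q.\<close>

definition max_ext :: "(real list \<Rightarrow> real) \<Rightarrow> real list list \<Rightarrow> real" where
  "max_ext H N = Inf {H q | q. prob_vec q \<and> chan_majorizes N [q]}"

end

theory Submission
  imports Defs "HOL-Library.Multiset"
begin

lemma sum_list_map_upt0: "sum_list (map f [0..<n]) = (\<Sum>i<n. f i)"
  by (simp add: interv_sum_list_conv_sum_set_nat atLeast0LessThan)

lemma sum_map_rsort: "sum_list (map (f::real\<Rightarrow>real) (rev (sort x))) = sum_list (map f (x::real list))"
proof -
  have "sum_list (map f (rev (sort x))) = sum_mset (mset (map f (rev (sort x))))"
    by (simp only: sum_mset_sum_list)
  also have "\<dots> = sum_mset (mset (map f x))" by (simp only: mset_map mset_rev mset_sort)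
  also have "\<dots> = sum_list (map f x)" by (simp only: sum_mset_sum_list)
  finally show ?thesis .
qed

lemma rsort_desc:
  assumes "i \<le> j" "j < length (x::real list)"
  shows "rev (sort x) ! j \<le> rev (sort x) ! i"
proof -
  have s: "sorted (sort x)" by simp
  have l: "length (sort x) = length x" by simp
  show ?thesis using assms
    by (simp add: rev_nth) (rule sorted_nth_mono[OF s], auto)
qed

lemma sum_list_idx: "sum_list (map f xs) = (\<Sum>j<length xs. f (xs ! j))"
  by (simp add: sum_list_sum_nth atLeast0LessThan)

lemma topU:
  fixes x :: "real list"
  assumes "k \<le> length x"
  shows "sum_list (take k (rev (sort x))) \<le> real k * t + sum_list (map (\<lambda>a. max (a - t) 0) x)"
proof -
  define s where "s = rev (sort x)"
  have ls: "length s = length x" by (simp add: s_def)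
  have "sum_list (take k s) = (\<Sum>j<k. s ! j)"
    using sum_list_idx[of "\<lambda>a. a" "take k s"] assms ls by simp
  also have "\<dots> = (\<Sum>j<k. t + (s!j - t))" by simp
  also have "\<dots> = real k * t + (\<Sum>j<k. s!j - t)" by (simp add: sum.distrib sum_subtractf)
  also have "\<dots> \<le> real k * t + (\<Sum>j<k. max (s!j - t) 0)"
    by (intro add_left_mono sum_mono) auto
  also have "(\<Sum>j<k. max (s!j - t) 0) \<le> (\<Sum>j<length s. max (s!j - t) 0)"
    by (rule sum_mono2) (use assms ls in auto)
  also have "\<dots> = sum_list (map (\<lambda>a. max (a - t) 0) s)" by (simp add: sum_list_idx)
  also have "\<dots> = sum_list (map (\<lambda>a. max (a - t) 0) x)" unfolding s_def by (rule sum_map_rsort)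
  finally show ?thesis unfolding s_def by simp
qed

lemma topE:
  fixes x :: "real list"
  assumes "0 < k" "k \<le> length x" "t = rev (sort x) ! (k - 1)"
  shows "sum_list (take k (rev (sort x))) = real k * t + sum_list (map (\<lambda>a. max (a - t) 0) x)"
proof -
  define s where "s = rev (sort x)"
  have ls: "length s = length x" by (simp add: s_def)
  have "sum_list (map (\<lambda>a. max (a - t) 0) x) = sum_list (map (\<lambda>a. max (a - t) 0) s)"
    unfolding s_def by (rule sum_map_rsort[symmetric])
  also have "\<dots> = (\<Sum>j<length s. max (s!j - t) 0)" by (simp add: sum_list_idx)
  also have "\<dots> = (\<Sum>j\<in>{..<k} \<union> {k..<length s}. max (s!j - t) 0)"
    using assms ls by (intro sum.cong) auto
  also have "\<dots> = (\<Sum>j<k. max (s!j - t) 0) + (\<Sum>j\<in>{k..<length s}. max (s!j - t) 0)"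
    by (rule sum.union_disjoint) auto
  also have "(\<Sum>j\<in>{k..<length s}. max (s!j - t) 0) = 0"
  proof (rule sum.neutral, rule ballI)
    fix j assume "j \<in> {k..<length s}"
    then have "s ! j \<le> t" using assms ls rsort_desc[of "k-1" j x] unfolding s_def by auto
    then show "max (s!j - t) 0 = 0" by simp
  qed
  also have "(\<Sum>j<k. max (s!j - t) 0) = (\<Sum>j<k. s!j - t)"
  proof (rule sum.cong, simp)
    fix j assume "j \<in> {..<k}"
    then have "t \<le> s ! j" using assms ls rsort_desc[of j "k-1" x] unfolding s_def by auto
    then show "max (s!j - t) 0 = s!j - t" by simp
  qed
  finally have e: "sum_list (map (\<lambda>a. max (a - t) 0) x) = (\<Sum>j<k. s!j) - real k * t"
    by (simp add: sum_subtractf)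
  have "sum_list (take k s) = (\<Sum>j<k. s ! j)"
    using sum_list_idx[of "\<lambda>a. a" "take k s"] assms ls by simp
  then show ?thesis using e unfolding s_def by simp
qed


lemma pad_id: "length p = n \<Longrightarrow> pad n p = p"
  by (simp add: pad_def)

lemma ds_maj:
  fixes p :: "real list" and A :: "nat \<Rightarrow> nat \<Rightarrow> real"
  assumes nn: "\<And>i j. i < length p \<Longrightarrow> j < length p \<Longrightarrow> 0 \<le> A i j"
    and rs: "\<And>i. i < length p \<Longrightarrow> (\<Sum>j<length p. A i j) = 1"
    and cs: "\<And>j. j < length p \<Longrightarrow> (\<Sum>i<length p. A i j) = 1"
  shows "majorizes p (map (\<lambda>i. \<Sum>j<length p. A i j * p!j) [0..<length p])"
proof -
  define n where "n = length p"
  define w where "w = map (\<lambda>i. \<Sum>j<n. A i j * p!j) [0..<n]"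
  have lw: "length w = n" by (simp add: w_def)
  have wi: "\<And>i. i < n \<Longrightarrow> w ! i = (\<Sum>j<n. A i j * p!j)" by (simp add: w_def)
  have sumeq: "sum_list p = sum_list w"
  proof -
    have "sum_list w = (\<Sum>i<n. \<Sum>j<n. A i j * p!j)" by (simp add: w_def sum_list_map_upt0)
    also have "\<dots> = (\<Sum>j<n. \<Sum>i<n. A i j * p!j)" by (rule sum.swap)
    also have "\<dots> = (\<Sum>j<n. (\<Sum>i<n. A i j) * p!j)" by (simp add: sum_distrib_right)
    also have "\<dots> = (\<Sum>j<n. p!j)" using cs n_def by simp
    also have "\<dots> = sum_list p" using sum_list_idx[of "\<lambda>a. a" p] n_def by simp
    finally show ?thesis by simp
  qed
  have topk: "sum_list (take k (rev (sort w))) \<le> sum_list (take k (rev (sort p)))" if k: "k \<le> n" for k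
  proof (cases "k = 0")
    case True then show ?thesis by simp
  next
    case False
    define t where "t = rev (sort p) ! (k - 1)"
    have "sum_list (take k (rev (sort w))) \<le> real k * t + sum_list (map (\<lambda>a. max (a - t) 0) w)"
      using topU[of k w t] k lw by simp
    also have "sum_list (map (\<lambda>a. max (a - t) 0) w) = (\<Sum>i<n. max (w!i - t) 0)"
      by (simp add: sum_list_idx lw)
    also have "\<dots> \<le> (\<Sum>i<n. \<Sum>j<n. A i j * max (p!j - t) 0)"
    proof (rule sum_mono)
      fix i assume i: "i \<in> {..<n}"
      have "w!i - t = (\<Sum>j<n. A i j * (p!j - t))"
        using wi[of i] i rs[of i] n_def by (simp add: right_diff_distrib sum_subtractf sum_distrib_right[symmetric])
      also have "\<dots> \<le> (\<Sum>j<n. A i j * max (p!j - t) 0)"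
        by (intro sum_mono mult_left_mono) (use nn i n_def in auto)
      finally have a: "w!i - t \<le> (\<Sum>j<n. A i j * max (p!j - t) 0)" .
      have b: "0 \<le> (\<Sum>j<n. A i j * max (p!j - t) 0)"
        by (intro sum_nonneg mult_nonneg_nonneg) (use nn i n_def in auto)
      show "max (w!i - t) 0 \<le> (\<Sum>j<n. A i j * max (p!j - t) 0)" using a b by simp
    qed
    also have "\<dots> = (\<Sum>j<n. \<Sum>i<n. A i j * max (p!j - t) 0)" by (rule sum.swap)
    also have "\<dots> = (\<Sum>j<n. (\<Sum>i<n. A i j) * max (p!j - t) 0)" by (simp add: sum_distrib_right)
    also have "\<dots> = (\<Sum>j<n. max (p!j - t) 0)" using cs n_def by simp
    also have "\<dots> = sum_list (map (\<lambda>a. max (a - t) 0) p)" by (simp add: sum_list_idx n_def)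
    finally have "sum_list (take k (rev (sort w))) \<le> real k * t + sum_list (map (\<lambda>a. max (a - t) 0) p)"
      by simp
    also have "\<dots> = sum_list (take k (rev (sort p)))"
      using topE[of k p t] False k n_def t_def by simp
    finally show ?thesis .
  qed
  have mx: "max (length p) (length w) = n" using lw n_def by simp
  have pp: "pad n p = p" using pad_id[of p n] n_def by simp
  have pw: "pad n w = w" using pad_id[of w n] lw by simp
  have "majorizes p w"
    unfolding majorizes_def Let_def mx pp pw using topk sumeq by blast
  then show ?thesis unfolding w_def n_def .
qed


lemma idx_bound: "(y::nat) < n \<Longrightarrow> z < nz \<Longrightarrow> y * nz + z < n * nz"
proof -
  assume a: "y < n" "z < nz"
  have "Suc y * nz \<le> n * nz" using a by (intro mult_le_mono1) simp
  then show ?thesis using a by simp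
qed

lemma sum_pair_idx: "(\<Sum>i<a*b. f i) = (\<Sum>x<a. \<Sum>z<(b::nat). f (x*b+z))"
proof -
  have "(\<Sum>i<a*b. f i) = (\<Sum>x<a. sum f {x*b..<x*b+b})" by (rule sum.nat_group[symmetric])
  also have "\<dots> = (\<Sum>x<a. \<Sum>z<b. f (x*b+z))"
  proof (rule sum.cong, simp)
    fix x
    have "sum f {0 + x*b..<b + x*b} = (\<Sum>z\<in>{0..<b}. f (z + x*b))" by (rule sum.shift_bounds_nat_ivl)
    then show "sum f {x*b..<x*b+b} = (\<Sum>z<b. f (x*b+z))"
      by (simp add: atLeast0LessThan add.commute)
  qed
  finally show ?thesis .
qed

lemma maj_sum: "majorizes p q \<Longrightarrow> sum_list p = sum_list q"
  by (simp add: majorizes_def Let_def)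

lemma pad_len: "length q \<le> n \<Longrightarrow> length (pad n q) = n"
  by (simp add: pad_def)

lemma prob_pad: "prob_vec q \<Longrightarrow> prob_vec (pad n q)"
  by (auto simp: prob_vec_def pad_def sum_list_replicate)

lemma scI: "schur_concave H \<Longrightarrow> prob_vec p \<Longrightarrow> prob_vec q \<Longrightarrow> majorizes p q \<Longrightarrow> H p \<le> H q"
  unfolding schur_concave_def by blast

lemma qcE:
  fixes k n :: nat and lam :: "nat \<Rightarrow> real" and P :: "nat \<Rightarrow> real list"
  assumes "quasiconcave H" "0 < k" "\<forall>i<k. 0 \<le> lam i" "(\<Sum>i<k. lam i) = 1"
    "\<forall>i<k. prob_vec (P i) \<and> length (P i) = n"
  shows "H (map (\<lambda>j. \<Sum>i<k. lam i * (P i ! j)) [0..<n]) \<ge> Min ((\<lambda>i. H (P i)) ` {..<k})"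
proof -
  have "\<forall>(k::nat) (n::nat) (lam::nat \<Rightarrow> real) (P::nat \<Rightarrow> real list).
        0 < k \<and> (\<forall>i<k. 0 \<le> lam i) \<and> (\<Sum>i<k. lam i) = 1 \<and>
        (\<forall>i<k. prob_vec (P i) \<and> length (P i) = n) \<longrightarrow>
        H (map (\<lambda>j. \<Sum>i<k. lam i * (P i ! j)) [0..<n]) \<ge> Min ((\<lambda>i. H (P i)) ` {..<k})"
    using assms(1) unfolding quasiconcave_def .
  note Q = this
  have "0 < k \<and> (\<forall>i<k. 0 \<le> lam i) \<and> (\<Sum>i<k. lam i) = 1 \<and>
        (\<forall>i<k. prob_vec (P i) \<and> length (P i) = n) \<longrightarrow>
        H (map (\<lambda>j. \<Sum>i<k. lam i * (P i ! j)) [0..<n]) \<ge> Min ((\<lambda>i. H (P i)) ` {..<k})"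
    by (rule spec[OF spec[OF spec[OF spec[OF Q, of k], of n], of lam], of P])
  then show ?thesis using assms(2-5) by simp
qed

lemma H_pad:
  assumes "schur_concave H" "prob_vec q" "length q \<le> n"
  shows "H (pad n q) = H q"
proof -
  have l: "length (pad n q) = n" by (rule pad_len[OF assms(3)])
  have mx1: "max (length q) (length (pad n q)) = n" "max (length (pad n q)) (length q) = n"
    using l assms(3) by simp_all
  have pp: "pad n (pad n q) = pad n q" using l by (rule pad_id)
  have s: "sum_list (pad n q) = sum_list q" by (simp add: pad_def sum_list_replicate)
  have m1: "majorizes q (pad n q)" unfolding majorizes_def Let_def mx1 pp
    by (intro conjI allI impI order_refl s[symmetric])
  have m2: "majorizes (pad n q) q" unfolding majorizes_def Let_def mx1 pp
    by (intro conjI allI impI order_refl s)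
  have pq: "prob_vec (pad n q)" using prob_pad[OF assms(2)] .
  have h1: "H q \<le> H (pad n q)" by (rule scI[OF assms(1) assms(2) pq m1])
  have h2: "H (pad n q) \<le> H q" by (rule scI[OF assms(1) pq assms(2) m2])
  show ?thesis using h1 h2 by linarith
qed

lemma chan_cols:
  assumes "is_channel N"
  shows "\<And>c. c \<in> set N \<Longrightarrow> prob_vec c \<and> length c = out_dim N"
proof -
  fix c assume c: "c \<in> set N"
  have "channel (length N) (length (hd N)) N" using assms unfolding is_channel_def by (rule conjunct2)
  then have "\<forall>c\<in>set N. prob_vec c \<and> length c = length (hd N)" unfolding channel_def by (rule conjunct2)
  then show "prob_vec c \<and> length c = out_dim N" using c unfolding out_dim_def by (rule bspec)
qed

lemma lower:
  assumes ce: "classical_entropy H" and qc: "quasiconcave H" and ch: "is_channel N"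
    and pq: "prob_vec q" and cm: "chan_majorizes N [q]"
  shows "Min (H ` set N) \<le> H q"
proof -
  have sc: "schur_concave H" using ce by (simp add: classical_entropy_def)
  define m where "m = out_dim N"
  define n where "n = max m (length q)"
  define L where "L = length N"
  have cols: "\<And>c. c \<in> set N \<Longrightarrow> prob_vec c \<and> length c = m" using chan_cols[OF ch] m_def by blast
  have Lpos: "0 < L" using ch by (simp add: is_channel_def L_def)
  have od: "out_dim [q] = length q" by (simp add: out_dim_def)
  have "chan_maj_same n (map (pad n) N) (map (pad n) [q])"
    using cm unfolding chan_majorizes_def Let_def od m_def n_def by simp
  then obtain nz S D where
    chS: "channel 1 (L * nz) S" and chD: "channel (n * nz) n D"
    and dsD: "\<forall>z<nz. \<forall>y'<n. (\<Sum>y<n. D ! (y * nz + z) ! y') = 1"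
    and eq0: "\<forall>x'<1. \<forall>y'<n. map (pad n) [q] ! x' ! y' =
             (\<Sum>x<L. \<Sum>z<nz. \<Sum>y<n.
                 D ! (y * nz + z) ! y' * (map (pad n) N ! x ! y) * (S ! x' ! (x * nz + z)))"
    unfolding chan_maj_same_def L_def by auto
  define s where "s = S ! 0"
  have s_in: "s \<in> set S" using chS by (simp add: channel_def s_def)
  have ps: "prob_vec s" and ls: "length s = L * nz" using chS s_in by (auto simp: channel_def)
  have eq: "\<And>y'. y' < n \<Longrightarrow> pad n q ! y' =
       (\<Sum>x<L. \<Sum>z<nz. \<Sum>y<n. D ! (y * nz + z) ! y' * (pad n (N ! x) ! y) * s ! (x * nz + z))"
  proof -
    fix y' assume y': "y' < n"
    have "pad n q ! y' = (\<Sum>x<L. \<Sum>z<nz. \<Sum>y<n.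
                 D ! (y * nz + z) ! y' * (map (pad n) N ! x ! y) * (S ! 0 ! (x * nz + z)))"
      using eq0 y' by simp
    also have "\<dots> = (\<Sum>x<L. \<Sum>z<nz. \<Sum>y<n. D ! (y * nz + z) ! y' * (pad n (N ! x) ! y) * s ! (x * nz + z))"
      by (intro sum.cong refl) (simp add: L_def s_def)
    finally show "pad n q ! y' = (\<Sum>x<L. \<Sum>z<nz. \<Sum>y<n. D ! (y * nz + z) ! y' * (pad n (N ! x) ! y) * s ! (x * nz + z))" .
  qed
  have kpos: "0 < L * nz"
  proof (rule ccontr)
    assume "\<not> 0 < L * nz"
    then have "s = []" using ls by auto
    then show False using ps by (simp add: prob_vec_def)
  qed
  have Dnn: "\<And>c y'. c < n * nz \<Longrightarrow> y' < n \<Longrightarrow> 0 \<le> D ! c ! y'"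
  proof -
    fix c y' assume c: "c < n * nz" and y': "y' < n"
    have "D ! c \<in> set D" using chD c by (simp add: channel_def)
    then have "prob_vec (D ! c)" "length (D ! c) = n" using chD by (auto simp: channel_def)
    then show "0 \<le> D ! c ! y'" using y' by (auto simp: prob_vec_def)
  qed
  have Dcs: "\<And>c. c < n * nz \<Longrightarrow> (\<Sum>y'<n. D ! c ! y') = 1"
  proof -
    fix c assume c: "c < n * nz"
    have "D ! c \<in> set D" using chD c by (simp add: channel_def)
    then have "prob_vec (D ! c)" "length (D ! c) = n" using chD by (auto simp: channel_def)
    then show "(\<Sum>y'<n. D ! c ! y') = 1" using sum_list_idx[of "\<lambda>a. a" "D ! c"]
      by (simp add: prob_vec_def)
  qed
  define P where "P i = map (\<lambda>y'. \<Sum>y<n. D ! (y * nz + i mod nz) ! y' * pad n (N ! (i div nz)) ! y) [0..<n]" for i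
  have Pgood: "prob_vec (P i) \<and> length (P i) = n \<and> Min (H ` set N) \<le> H (P i)" if i: "i < L * nz" for i
  proof -
    define x where "x = i div nz"
    define z where "z = i mod nz"
    have nzpos: "0 < nz" using kpos by simp
    have x: "x < L" using i nzpos unfolding x_def by (simp add: less_mult_imp_div_less)
    have z: "z < nz" using nzpos z_def by simp
    have Nx: "N ! x \<in> set N" using x L_def by simp
    then have pNx: "prob_vec (N ! x)" and lNx: "length (N ! x) = m" using cols by auto
    define p where "p = pad n (N ! x)"
    have lp: "length p = n" unfolding p_def using lNx n_def by (simp add: pad_len)
    have pp: "prob_vec p" unfolding p_def using pNx by (rule prob_pad)
    have Pi: "P i = map (\<lambda>y'. \<Sum>y<length p. (D ! (y * nz + z) ! y') * p ! y) [0..<length p]"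
      unfolding P_def x_def[symmetric] z_def[symmetric] p_def[symmetric] lp by (rule refl)
    have mj: "majorizes p (P i)" unfolding Pi
    proof (rule ds_maj)
      fix i' j assume "i' < length p" "j < length p"
      then show "0 \<le> D ! (j * nz + z) ! i'" using Dnn idx_bound z lp by simp
    next
      fix i' assume "i' < length p"
      then show "(\<Sum>j<length p. D ! (j * nz + z) ! i') = 1" using dsD z lp by simp
    next
      fix j assume "j < length p"
      then show "(\<Sum>i'<length p. D ! (j * nz + z) ! i') = 1" using Dcs idx_bound z lp by simp
    qed
    have lP: "length (P i) = n" by (simp add: P_def)
    have nnP: "\<forall>v\<in>set (P i). 0 \<le> v"
    proof
      fix v assume "v \<in> set (P i)"
      then obtain y' where y': "y' < n" and v: "v = (\<Sum>y<n. D ! (y * nz + z) ! y' * p ! y)"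
        unfolding P_def x_def z_def p_def by auto
      have "\<And>y. y < n \<Longrightarrow> 0 \<le> p ! y" using pp lp by (auto simp: prob_vec_def)
      then show "0 \<le> v" unfolding v using Dnn idx_bound z y'
        by (intro sum_nonneg mult_nonneg_nonneg) auto
    qed
    have pP: "prob_vec (P i)" using nnP maj_sum[OF mj] pp by (simp add: prob_vec_def)
    have "H p \<le> H (P i)" by (rule scI[OF sc pp pP mj])
    moreover have "H p = H (N ! x)" unfolding p_def using H_pad[OF sc pNx] lNx n_def by simp
    moreover have "Min (H ` set N) \<le> H (N ! x)" using Nx by simp
    ultimately show ?thesis using pP lP by simp
  qed
  have qcI: "H (map (\<lambda>j. \<Sum>i<L * nz. s ! i * (P i ! j)) [0..<n]) \<ge> Min ((\<lambda>i. H (P i)) ` {..<L * nz})"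
  proof -
    have nn: "\<forall>i<L * nz. 0 \<le> s ! i" using ps ls by (auto simp: prob_vec_def)
    have s1: "(\<Sum>i<L * nz. s ! i) = 1" using ps ls sum_list_idx[of "\<lambda>a. a" s] by (simp add: prob_vec_def)
    have pv: "\<forall>i<L * nz. prob_vec (P i) \<and> length (P i) = n" using Pgood by blast
    show ?thesis by (rule qcE[OF qc kpos nn s1 pv])
  qed
  have comb: "map (\<lambda>j. \<Sum>i<L * nz. s ! i * (P i ! j)) [0..<n] = pad n q"
  proof (rule nth_equalityI)
    show "length (map (\<lambda>j. \<Sum>i<L * nz. s ! i * (P i ! j)) [0..<n]) = length (pad n q)"
      using pad_len n_def by simp
  next
    fix j assume "j < length (map (\<lambda>j. \<Sum>i<L * nz. s ! i * (P i ! j)) [0..<n])"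
    then have j: "j < n" by simp
    have "(\<Sum>i<L * nz. s ! i * (P i ! j)) = (\<Sum>x<L. \<Sum>z<nz. s ! (x*nz+z) * (P (x*nz+z) ! j))"
      by (rule sum_pair_idx)
    also have "\<dots> = (\<Sum>x<L. \<Sum>z<nz. \<Sum>y<n. D ! (y * nz + z) ! j * (pad n (N ! x) ! y) * s ! (x * nz + z))"
    proof (intro sum.cong refl)
      fix x z assume "x \<in> {..<L}" "z \<in> {..<nz}"
      then have z: "z < nz" by simp
      then have dm: "(x*nz+z) div nz = x" "(x*nz+z) mod nz = z" by auto
      show "s ! (x*nz+z) * (P (x*nz+z) ! j) = (\<Sum>y<n. D ! (y * nz + z) ! j * (pad n (N ! x) ! y) * s ! (x * nz + z))"
        unfolding P_def using j dm by (simp add: sum_distrib_left mult_ac)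
    qed
    also have "\<dots> = pad n q ! j" using eq[OF j] by simp
    finally show "map (\<lambda>j. \<Sum>i<L * nz. s ! i * (P i ! j)) [0..<n] ! j = pad n q ! j" using j by simp
  qed
  have "Min (H ` set N) \<le> Min ((\<lambda>i. H (P i)) ` {..<L * nz})"
  proof (subst Min_ge_iff)
    show "finite ((\<lambda>i. H (P i)) ` {..<L * nz})" by simp
    show "(\<lambda>i. H (P i)) ` {..<L * nz} \<noteq> {}" using kpos by (metis image_is_empty lessThan_iff empty_iff)
    show "\<forall>a\<in>(\<lambda>i. H (P i)) ` {..<L * nz}. Min (H ` set N) \<le> a" using Pgood by auto
  qed
  also have "\<dots> \<le> H (pad n q)" using qcI comb by simp
  also have "H (pad n q) = H q" using H_pad[OF sc pq] n_def by simp
  finally show ?thesis .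
qed


lemma upper:
  assumes ch: "is_channel N" and x0: "x0 < length N"
  shows "chan_majorizes N [N ! x0]"
proof -
  define m where "m = out_dim N"
  define L where "L = length N"
  have cols: "\<And>c. c \<in> set N \<Longrightarrow> prob_vec c \<and> length c = m" using chan_cols[OF ch] m_def by blast
  define c where "c = N ! x0"
  have cin: "c \<in> set N" using x0 c_def by simp
  have lc: "length c = m" using cols cin by blast
  have od: "out_dim [c] = m" using lc by (simp add: out_dim_def)
  have mN: "map (pad m) N = N"
    by (rule map_idI) (use cols in \<open>auto intro: pad_id\<close>)
  have mc: "map (pad m) [c] = [c]" using pad_id[OF lc] by simp
  define S :: "real list list" where "S = [map (\<lambda>i. if i = x0 then 1 else 0) [0..<L]]"
  define D :: "real list list" where "D = map (\<lambda>y. map (\<lambda>y'. if y = y' then 1 else 0) [0..<m]) [0..<m]"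
  have chS: "channel 1 (L * 1) S"
    unfolding channel_def S_def prob_vec_def using x0 L_def
    by (auto simp: sum_list_map_upt0)
  have chD: "channel (m * 1) m D"
    unfolding channel_def D_def prob_vec_def
    by (auto simp: sum_list_map_upt0)
  have dsD: "\<forall>z<1. \<forall>y'<m. (\<Sum>y<m. D ! (y * 1 + z) ! y') = 1"
  proof (intro allI impI)
    fix z y' :: nat assume z: "z < 1" and y': "y' < m"
    have "(\<Sum>y<m. D ! (y * 1 + z) ! y') = (\<Sum>y<m. if y = y' then 1 else 0)"
      using z y' by (intro sum.cong refl) (simp add: D_def)
    also have "\<dots> = 1" using y' by simp
    finally show "(\<Sum>y<m. D ! (y * 1 + z) ! y') = 1" .
  qed
  have eqn: "\<forall>x'<length [c]. \<forall>y'<m. [c] ! x' ! y' =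
             (\<Sum>x<length N. \<Sum>z<1. \<Sum>y<m.
                 D ! (y * 1 + z) ! y' * (N ! x ! y) * (S ! x' ! (x * 1 + z)))"
  proof (intro allI impI)
    fix x' y' assume x': "x' < length [c]" and y': "y' < m"
    have "(\<Sum>x<length N. \<Sum>z<1. \<Sum>y<m. D ! (y * 1 + z) ! y' * (N ! x ! y) * (S ! x' ! (x * 1 + z)))
        = (\<Sum>x<length N. \<Sum>y<m. (if y = y' then 1 else 0) * (N ! x ! y) * (if x = x0 then 1 else 0))"
    proof (rule sum.cong[OF refl])
      fix x assume x: "x \<in> {..<length N}"
      have "(\<Sum>z<1. \<Sum>y<m. D ! (y * 1 + z) ! y' * (N ! x ! y) * (S ! x' ! (x * 1 + z)))
          = (\<Sum>y<m. D ! y ! y' * (N ! x ! y) * (S ! x' ! x))" by simp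
      also have "\<dots> = (\<Sum>y<m. (if y = y' then 1 else 0) * (N ! x ! y) * (if x = x0 then 1 else 0))"
        using x x' y' by (intro sum.cong refl) (simp add: D_def S_def L_def)
      finally show "(\<Sum>z<1. \<Sum>y<m. D ! (y * 1 + z) ! y' * (N ! x ! y) * (S ! x' ! (x * 1 + z)))
          = (\<Sum>y<m. (if y = y' then 1 else 0) * (N ! x ! y) * (if x = x0 then 1 else 0))" .
    qed
    also have "\<dots> = (\<Sum>x<length N. (N ! x ! y') * (if x = x0 then 1 else 0))"
      using y' by (intro sum.cong refl) (simp add: if_distrib[of "\<lambda>a. a * b" for b] sum.delta' cong: if_cong)
    also have "\<dots> = N ! x0 ! y'" using x0 by (simp add: if_distrib cong: if_cong)
    finally show "[c] ! x' ! y' = (\<Sum>x<length N. \<Sum>z<1. \<Sum>y<m.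
                 D ! (y * 1 + z) ! y' * (N ! x ! y) * (S ! x' ! (x * 1 + z)))"
      using x' c_def by simp
  qed
  have "chan_maj_same m N [c]"
    unfolding chan_maj_same_def using chS chD dsD eqn L_def by (intro exI[of _ 1]) auto
  then show ?thesis unfolding chan_majorizes_def Let_def c_def[symmetric] od m_def[symmetric]
    by (simp only: max.idem mN mc)
qed


lemma max_ext_min:
  assumes ce: "classical_entropy H" and qc: "quasiconcave H" and ch: "is_channel N"
  shows "max_ext H N = Min (H ` set N)"
proof -
  have ne: "set N \<noteq> {}" using ch by (simp add: is_channel_def)
  have "Min (H ` set N) \<in> H ` set N" using ne by (intro Min_in) auto
  then obtain c where c: "c \<in> set N" and hc: "H c = Min (H ` set N)" by auto
  then obtain x0 where x0: "x0 < length N" and cx: "c = N ! x0" by (auto simp: in_set_conv_nth)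
  have pc: "prob_vec c" using chan_cols[OF ch] c by blast
  show ?thesis unfolding max_ext_def
  proof (rule cInf_eq_minimum)
    show "Min (H ` set N) \<in> {H q |q. prob_vec q \<and> chan_majorizes N [q]}"
      using upper[OF ch x0] pc hc cx by (metis (mono_tags, lifting) mem_Collect_eq)
    show "\<And>x. x \<in> {H q |q. prob_vec q \<and> chan_majorizes N [q]} \<Longrightarrow> Min (H ` set N) \<le> x"
      using lower[OF ce qc ch] by auto
  qed
qed

lemma length_tensor: "length (tensor c d) = length c * length d"
  by (induct c) (auto simp: tensor_def)

lemma sum_tensor: "sum_list (tensor c d) = sum_list c * (sum_list d :: real)"
  by (induct c) (auto simp: tensor_def sum_list_const_mult distrib_right)

lemma nn_tensor: "\<forall>x\<in>set c. (0::real) \<le> x \<Longrightarrow> \<forall>x\<in>set d. 0 \<le> x \<Longrightarrow> \<forall>x\<in>set (tensor c d). 0 \<le> x"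
  by (auto simp: tensor_def)

lemma prob_tensor: "prob_vec c \<Longrightarrow> prob_vec d \<Longrightarrow> prob_vec (tensor c d)"
  unfolding prob_vec_def using sum_tensor[of c d] nn_tensor[of c d] by simp

lemma set_chan_tensor: "set (chan_tensor N M) = (\<lambda>(c,d). tensor c d) ` (set N \<times> set M)"
  by (auto simp: chan_tensor_def)

lemma chan_tensor_ch:
  assumes "is_channel N" "is_channel M"
  shows "is_channel (chan_tensor N M)"
proof -
  have cN: "\<And>c. c \<in> set N \<Longrightarrow> prob_vec c \<and> length c = out_dim N" using chan_cols[OF assms(1)] by blast
  have cM: "\<And>c. c \<in> set M \<Longrightarrow> prob_vec c \<and> length c = out_dim M" using chan_cols[OF assms(2)] by blast
  have ne: "set N \<noteq> {}" "set M \<noteq> {}" using assms by (auto simp: is_channel_def)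
  have cols: "\<And>e. e \<in> set (chan_tensor N M) \<Longrightarrow> prob_vec e \<and> length e = out_dim N * out_dim M"
  proof -
    fix e assume "e \<in> set (chan_tensor N M)"
    then obtain c d where "c \<in> set N" "d \<in> set M" "e = tensor c d" unfolding set_chan_tensor by auto
    then show "prob_vec e \<and> length e = out_dim N * out_dim M"
      using cN cM prob_tensor length_tensor by metis
  qed
  have nT: "set (chan_tensor N M) \<noteq> {}" unfolding set_chan_tensor using ne by auto
  then have T: "chan_tensor N M \<noteq> []" by auto
  then have "hd (chan_tensor N M) \<in> set (chan_tensor N M)" by simp
  then have "length (hd (chan_tensor N M)) = out_dim N * out_dim M" using cols by blast
  then show ?thesis unfolding is_channel_def channel_def using T cols by auto
qed

theorem mainTheorem16:
  fixes H :: "real list \<Rightarrow> real" and N M :: "real list list"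
  assumes "classical_entropy H"
    and "quasiconcave H"
    and "is_channel N"
    and "is_channel M"
  shows "max_ext H (chan_tensor N M) = max_ext H N + max_ext H M"
proof -
  have ad: "additive H" using assms(1) by (simp add: classical_entropy_def)
  have cN: "\<And>c. c \<in> set N \<Longrightarrow> prob_vec c" using chan_cols[OF assms(3)] by blast
  have cM: "\<And>c. c \<in> set M \<Longrightarrow> prob_vec c" using chan_cols[OF assms(4)] by blast
  have neN: "set N \<noteq> {}" and neM: "set M \<noteq> {}" using assms by (auto simp: is_channel_def)
  have "Min (H ` set N) \<in> H ` set N" using neN by (intro Min_in) auto
  then obtain c0 where c0: "c0 \<in> set N" "H c0 = Min (H ` set N)" by auto
  have "Min (H ` set M) \<in> H ` set M" using neM by (intro Min_in) auto
  then obtain d0 where d0: "d0 \<in> set M" "H d0 = Min (H ` set M)" by auto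
  have Ht: "\<And>c d. c \<in> set N \<Longrightarrow> d \<in> set M \<Longrightarrow> H (tensor c d) = H c + H d"
    using ad cN cM by (simp add: additive_def)
  have "Min (H ` set (chan_tensor N M)) = Min (H ` set N) + Min (H ` set M)"
  proof (rule Min_eqI)
    show "finite (H ` set (chan_tensor N M))" by simp
    show "Min (H ` set N) + Min (H ` set M) \<in> H ` set (chan_tensor N M)"
      unfolding set_chan_tensor using c0 d0 Ht[OF c0(1) d0(1)]
      by (metis (no_types, lifting) SigmaI case_prod_conv image_eqI)
    fix y assume "y \<in> H ` set (chan_tensor N M)"
    then obtain c d where c: "c \<in> set N" and d: "d \<in> set M" and y: "y = H (tensor c d)"
      unfolding set_chan_tensor by auto
    have "Min (H ` set N) \<le> H c" using c by simp
    moreover have "Min (H ` set M) \<le> H d" using d by simp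
    ultimately show "Min (H ` set N) + Min (H ` set M) \<le> y" using Ht[OF c d] y by simp
  qed
  then show ?thesis
    using max_ext_min[OF assms(1,2) chan_tensor_ch[OF assms(3,4)]]
      max_ext_min[OF assms(1,2,3)] max_ext_min[OF assms(1,2,4)] by simp
qed

end
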